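(* Suppose a deterministic algorithm $A$, given $n$ elements, guarantees that after $m$ comparisons it can list $r$ elements, each of which is guaranteed to be $k$-greater than at least $q$ elements. Then $m = \Omega\left(\max\{q^{1+1/(2^k-1)},\, q\cdot r^{1/2^{k-1}}\}\right)$, with an absolute implied constant.
   Context: Model of imprecise comparisons: there are $n$ elements, each with a fixed unknown real value; we identify an element with its value. Asked to compare $x_i$ and $x_j$, the comparator answers either "$x_i \ge x_j$" or "$x_j \ge x_i$". If $|x_i-x_j|>1$ the answer is correct; if $|x_i-x_j|\le 1$ the answer is arbitrary (possibly adversarial and adaptive). An element $x$ is $k$-greater than $y$ if $x \ge y - k$. "Guaranteed" means the property holds for every assignment of values and every comparator behaviour consistent with the answers received. *)

theory Defs
  imports Complex_Main
begin

text \<open>Deterministic comparison algorithms as decision trees. Elements are indices 0..<n.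
  A node Query i j yes no asks the comparator about x_i and x_j; the answer
  "x_i \<ge> x_j" leads to yes, the answer "x_j \<ge> x_i" leads to no.
  A leaf outputs a list of elements.\<close>

datatype alg = Leaf "nat list" | Query nat nat alg alg

text \<open>Number of comparisons in the worst case (longest path).\<close>
fun depth :: "alg \<Rightarrow> nat" where
  "depth (Leaf L) = 0"
| "depth (Query i j a b) = Suc (max (depth a) (depth b))"

definition answer_ok :: "(nat \<Rightarrow> real) \<Rightarrow> nat \<Rightarrow> nat \<Rightarrow> bool" where
  "answer_ok x i j \<longleftrightarrow> (\<bar>x i - x j\<bar> \<le> 1 \<or> x i \<ge> x j)"

text \<open>outputs x A L: some (possibly adversarial, adaptive) comparator behaviour
  consistent with the values x makes A output L.\<close>
inductive outputs :: "(nat \<Rightarrow> real) \<Rightarrow> alg \<Rightarrow> nat list \<Rightarrow> bool" where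
  leaf: "outputs x (Leaf L) L"
| yes: "answer_ok x i j \<Longrightarrow> outputs x a L \<Longrightarrow> outputs x (Query i j a b) L"
| no: "answer_ok x j i \<Longrightarrow> outputs x b L \<Longrightarrow> outputs x (Query i j a b) L"

definition k_greater :: "nat \<Rightarrow> real \<Rightarrow> real \<Rightarrow> bool" where
  "k_greater k u v \<longleftrightarrow> u \<ge> v - real k"

definition guarantees :: "nat \<Rightarrow> alg \<Rightarrow> nat \<Rightarrow> nat \<Rightarrow> nat \<Rightarrow> bool" where
  "guarantees n A r q k \<longleftrightarrow>
     (\<forall>x L. outputs x A L \<longrightarrow>
        length L = r \<and> distinct L \<and> set L \<subseteq> {..<n} \<and>
        (\<forall>e\<in>set L. card {y \<in> {..<n}. y \<noteq> e \<and> k_greater k (x e) (x y)} \<ge> q))"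

end

theory Submission
  imports Defs
begin


definition outdeg :: "(nat \<times> nat) set \<Rightarrow> nat \<Rightarrow> nat" where
  "outdeg E a = card {b. (a,b) \<in> E}"

fun run :: "(nat \<times> nat) set \<Rightarrow> alg \<Rightarrow> nat list \<times> (nat \<times> nat) set" where
  "run E (Leaf L) = (L, E)"
| "run E (Query i j a b) =
     (if i = j \<or> (i,j) \<in> E then run E a
      else if (j,i) \<in> E then run E b
      else if outdeg E i \<le> outdeg E j then run (insert (i,j) E) a
      else run (insert (j,i) E) b)"

definition Qinv :: "(nat \<times> nat) set \<Rightarrow> bool" where
  "Qinv E \<longleftrightarrow> (\<forall>a t. card {b. (a,b) \<in> E \<and> outdeg E b < t} \<le> t)"

lemma run_mono: "E \<subseteq> snd (run E A)"
  by (induction E A rule: run.induct) (auto simp: Let_def)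

lemma run_card: "finite E \<Longrightarrow> finite (snd (run E A)) \<and> card (snd (run E A)) \<le> card E + depth A"
proof (induction E A rule: run.induct)
  case (1 E L)
  then show ?case by simp
next
  case (2 E i j a b)
  show ?case
  proof (cases "i = j \<or> (i,j) \<in> E")
    case True
    then show ?thesis using 2 by auto
  next
    case F1: False
    show ?thesis
    proof (cases "(j,i) \<in> E")
      case True
      then show ?thesis using 2 F1 by auto
    next
      case F2: False
      show ?thesis
      proof (cases "outdeg E i \<le> outdeg E j")
        case True
        have "finite (insert (i,j) E)" using 2 by simp
        moreover have "card (insert (i,j) E) \<le> Suc (card E)" by (simp add: card_insert_le_m1 card_insert_if)
        ultimately show ?thesis using 2(3)[OF F1 F2 True] F1 F2 True by auto
      next
        case False
        have "finite (insert (j,i) E)" using 2 by simp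
        moreover have "card (insert (j,i) E) \<le> Suc (card E)" using 2(5) by (simp add: card_insert_if)
        ultimately show ?thesis using 2(4)[OF F1 F2 False] F1 F2 False by auto
      qed
    qed
  qed
qed

lemma answer_okI: "x j \<le> x i + 1 \<Longrightarrow> answer_ok x i j"
  unfolding answer_ok_def by auto

lemma run_outputs:
  assumes "\<forall>(i,j)\<in>snd (run E A). x j \<le> x i + 1"
  shows "outputs x A (fst (run E A))"
  using assms
proof (induction E A rule: run.induct)
  case (1 E L)
  then show ?case by (simp add: outputs.leaf)
next
  case (2 E i j a b)
  show ?case
  proof (cases "i = j \<or> (i,j) \<in> E")
    case True
    have "answer_ok x i j"
    proof (cases "i = j")
      case True then show ?thesis by (simp add: answer_ok_def)
    next
      case False
      hence "(i,j) \<in> snd (run E a)" using run_mono \<open>i = j \<or> (i,j) \<in> E\<close> by blast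
      hence "x j \<le> x i + 1" using 2(5) \<open>i = j \<or> (i,j) \<in> E\<close> by auto
      thus ?thesis by (rule answer_okI)
    qed
    then show ?thesis using 2 True by (auto intro: outputs.yes)
  next
    case F1: False
    show ?thesis
    proof (cases "(j,i) \<in> E")
      case True
      have "(j,i) \<in> snd (run E b)" using run_mono True by blast
      hence "answer_ok x j i" using True F1 2(5) by (auto intro: answer_okI)
      then show ?thesis using 2 F1 True by (auto intro: outputs.no)
    next
      case F2: False
      show ?thesis
      proof (cases "outdeg E i \<le> outdeg E j")
        case True
        have "(i,j) \<in> snd (run (insert (i,j) E) a)" using run_mono by blast
        hence "answer_ok x i j" using True F1 F2 2(5) by (auto intro: answer_okI)
        then show ?thesis using 2(3)[OF F1 F2 True] 2(5) F1 F2 True by (auto intro: outputs.yes)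
      next
        case False
        have "(j,i) \<in> snd (run (insert (j,i) E) b)" using run_mono by blast
        hence "answer_ok x j i" using False F1 F2 2(5) by (auto intro: answer_okI)
        then show ?thesis using 2(4)[OF F1 F2 False] 2(5) F1 F2 False by (auto intro: outputs.no)
      qed
    qed
  qed
qed



lemma outdeg_finite: "finite E \<Longrightarrow> finite {b. (a,b) \<in> E}"
proof -
  assume "finite E"
  moreover have "{b. (a,b) \<in> E} \<subseteq> snd ` E" by force
  ultimately show ?thesis using finite_subset by blast
qed

lemma outdeg_insert:
  assumes "finite E" "(i,j) \<notin> E"
  shows "outdeg (insert (i,j) E) b = outdeg E b + (if b = i then 1 else 0)"
proof (cases "b = i")
  case True
  have "{c. (b,c) \<in> insert (i,j) E} = insert j {c. (b,c) \<in> E}" using True by auto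
  moreover have "j \<notin> {c. (b,c) \<in> E}" using True assms by auto
  ultimately show ?thesis using True outdeg_finite[OF assms(1)] by (simp add: outdeg_def)
next
  case False
  have "{c. (b,c) \<in> insert (i,j) E} = {c. (b,c) \<in> E}" using False by auto
  then show ?thesis using False by (simp add: outdeg_def)
qed

lemma Qinv_insert:
  assumes fin: "finite E" and Q: "Qinv E" and nE: "(i,j) \<notin> E" and ij: "i \<noteq> j"
    and le: "outdeg E i \<le> outdeg E j"
  shows "Qinv (insert (i,j) E)"
  unfolding Qinv_def
proof (intro allI)
  fix a t
  let ?E' = "insert (i,j) E"
  let ?S = "{b. (a,b) \<in> E \<and> outdeg E b < t}"
  have od: "\<And>b. outdeg E b \<le> outdeg ?E' b" using outdeg_insert[OF fin nE] by simp
  have finS: "finite ?S" using outdeg_finite[OF fin, of a] by (rule finite_subset[rotated]) auto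
  have QS: "card ?S \<le> t" using Q unfolding Qinv_def by blast
  show "card {b. (a,b) \<in> ?E' \<and> outdeg ?E' b < t} \<le> t"
  proof (cases "a = i \<and> outdeg E j < t")
    case True
    have "{b. (a,b) \<in> ?E' \<and> outdeg ?E' b < t} \<subseteq> insert j ?S"
      using od by (auto intro: le_less_trans)
    hence "card {b. (a,b) \<in> ?E' \<and> outdeg ?E' b < t} \<le> card (insert j ?S)"
      using finS by (intro card_mono) auto
    also have "\<dots> \<le> Suc (card ?S)" using finS by (simp add: card_insert_if)
    also have "card ?S \<le> outdeg E i"
      unfolding outdeg_def using True outdeg_finite[OF fin, of i] by (intro card_mono) auto
    finally show ?thesis using le True by linarith
  next
    case False
    have "{b. (a,b) \<in> ?E' \<and> outdeg ?E' b < t} \<subseteq> ?S"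
    proof
      fix b assume b: "b \<in> {b. (a,b) \<in> ?E' \<and> outdeg ?E' b < t}"
      hence lt: "outdeg E b < t" using od le_less_trans by blast
      show "b \<in> ?S"
      proof (cases "(a,b) = (i,j)")
        case True
        hence "outdeg ?E' j < t" using b by auto
        moreover have "outdeg ?E' j = outdeg E j" using outdeg_insert[OF fin nE] ij by simp
        ultimately show ?thesis using False True by auto
      next
        case False
        then show ?thesis using b lt by auto
      qed
    qed
    hence "card {b. (a,b) \<in> ?E' \<and> outdeg ?E' b < t} \<le> card ?S" using finS by (rule card_mono[rotated])
    then show ?thesis using QS by linarith
  qed
qed

lemma run_Qinv: "finite E \<Longrightarrow> Qinv E \<Longrightarrow> Qinv (snd (run E A))"
proof (induction E A rule: run.induct)
  case (1 E L)
  then show ?case by simp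
next
  case (2 E i j a b)
  show ?case
  proof (cases "i = j \<or> (i,j) \<in> E")
    case True
    then show ?thesis using 2 by auto
  next
    case F1: False
    show ?thesis
    proof (cases "(j,i) \<in> E")
      case True
      then show ?thesis using 2 F1 by auto
    next
      case F2: False
      show ?thesis
      proof (cases "outdeg E i \<le> outdeg E j")
        case True
        have "Qinv (insert (i,j) E)" using Qinv_insert[OF 2(5) 2(6)] F1 True by auto
        then show ?thesis using 2(3)[OF F1 F2 True] 2(5) F1 F2 True by auto
      next
        case False
        have "Qinv (insert (j,i) E)" using Qinv_insert[OF 2(5) 2(6), of j i] F1 F2 False by auto
        then show ?thesis using 2(4)[OF F1 F2 False] 2(5) F1 F2 False by auto
      qed
    qed
  qed
qed

lemma Qinv_empty: "Qinv {}"
  by (simp add: Qinv_def)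



definition Nb :: "(nat \<times> nat) set \<Rightarrow> nat set \<Rightarrow> nat set" where
  "Nb E S = {y. \<exists>w\<in>S. (w,y) \<in> E}"

fun Bl :: "(nat \<times> nat) set \<Rightarrow> nat \<Rightarrow> nat \<Rightarrow> nat set" where
  "Bl E 0 v = {v}"
| "Bl E (Suc j) v = Bl E j v \<union> Nb E (Bl E j v)"

lemma Bl_mono: "j \<le> j' \<Longrightarrow> Bl E j v \<subseteq> Bl E j' v"
  by (induction j' rule: dec_induct) auto

lemma Bl_self: "v \<in> Bl E j v"
  using Bl_mono[of 0 j E v] by auto

lemma Nb_mono: "S \<subseteq> T \<Longrightarrow> Nb E S \<subseteq> Nb E T"
  unfolding Nb_def by auto

lemma Bl_sub: "Bl E j v \<subseteq> insert v (snd ` E)"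
proof (induction j)
  case 0 then show ?case by simp
next
  case (Suc j)
  have "Nb E (Bl E j v) \<subseteq> snd ` E" unfolding Nb_def by (auto intro: rev_image_eqI)
  then show ?case using Suc by auto
qed

lemma Bl_finite: "finite E \<Longrightarrow> finite (Bl E j v)"
  using Bl_sub by (meson finite_imageI finite_insert finite_subset)

lemma Bl_card_le: "finite E \<Longrightarrow> card (Bl E j v) \<le> card E + 1"
proof -
  assume f: "finite E"
  have "card (Bl E j v) \<le> card (insert v (snd ` E))" using Bl_sub f by (intro card_mono) auto
  also have "\<dots> \<le> Suc (card (snd ` E))" by (simp add: card_insert_le_m1 card_insert_if)
  also have "card (snd ` E) \<le> card E" using f by (rule card_image_le)
  finally show ?thesis by simp
qed

lemma Bl_in_Nb: "Bl E j v \<subseteq> insert v (Nb E (Bl E j v))"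
proof (induction j)
  case 0 then show ?case by simp
next
  case (Suc j)
  have "Nb E (Bl E j v) \<subseteq> Nb E (Bl E (Suc j) v)" by (rule Nb_mono) simp
  then show ?case using Suc by auto
qed

lemma Bl_Suc_sub: "Bl E (Suc j) v \<subseteq> insert v (Nb E (Bl E j v))"
  using Bl_in_Nb[of E j v] by auto

lemma Bl_empty_out: "{b. (v,b) \<in> E} = {} \<Longrightarrow> Bl E j v = {v}"
  by (induction j) (auto simp: Nb_def)

lemma sum_outdeg_le:
  assumes "finite E" "finite S"
  shows "(\<Sum>a\<in>S. outdeg E a) \<le> card E"
proof -
  have "(\<Sum>a\<in>S. outdeg E a) = card (Sigma S (\<lambda>a. {b. (a,b) \<in> E}))"
    unfolding outdeg_def using assms by (simp add: outdeg_finite)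
  also have "\<dots> \<le> card E" using assms(1) by (intro card_mono) auto
  finally show ?thesis .
qed

lemma high_card:
  assumes "finite E" "l \<ge> 1"
  shows "l * card {y. l \<le> outdeg E y} \<le> card E"
proof -
  let ?H = "{y. l \<le> outdeg E y}"
  have "?H \<subseteq> fst ` E"
  proof
    fix y assume "y \<in> ?H"
    hence "outdeg E y \<noteq> 0" using assms(2) by auto
    hence "{b. (y,b) \<in> E} \<noteq> {}" unfolding outdeg_def by (metis card.empty)
    then show "y \<in> fst ` E" by force
  qed
  hence fH: "finite ?H" using assms(1) finite_subset by blast
  have "l * card ?H = (\<Sum>a\<in>?H. l)" by simp
  also have "\<dots> \<le> (\<Sum>a\<in>?H. outdeg E a)" by (rule sum_mono) auto
  also have "\<dots> \<le> card E" by (rule sum_outdeg_le[OF assms(1) fH])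
  finally show ?thesis .
qed

lemma step_card:
  assumes fin: "finite E" and Q: "Qinv E" and l: "l \<ge> 1"
  shows "card (Bl E (Suc j) v) \<le> 2 * l * card (Bl E j v) + card {y. l \<le> outdeg E y}"
proof -
  let ?B = "Bl E j v"
  let ?H = "{y. l \<le> outdeg E y}"
  let ?U = "\<Union>w\<in>?B. {b. (w,b) \<in> E \<and> outdeg E b < l}"
  have fB: "finite ?B" by (rule Bl_finite[OF fin])
  have fH: "finite ?H"
  proof -
    have "?H \<subseteq> fst ` E"
    proof
      fix y assume "y \<in> ?H"
      hence "outdeg E y \<noteq> 0" using l by auto
      hence "{b. (y,b) \<in> E} \<noteq> {}" unfolding outdeg_def by (metis card.empty)
      then show "y \<in> fst ` E" by force
    qed
    thus ?thesis using fin finite_subset by blast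
  qed
  have fU: "finite ?U"
  proof (rule finite_UN_I[OF fB])
    fix w show "finite {b. (w,b) \<in> E \<and> outdeg E b < l}"
      by (rule finite_subset[OF _ outdeg_finite[OF fin, of w]]) blast
  qed
  have sub: "Bl E (Suc j) v \<subseteq> insert v (?U \<union> ?H)"
  proof
    fix y assume "y \<in> Bl E (Suc j) v"
    hence "y \<in> insert v (Nb E ?B)" using Bl_Suc_sub[of E j v] by blast
    then consider "y = v" | w where "w \<in> ?B" "(w,y) \<in> E" unfolding Nb_def by blast
    then show "y \<in> insert v (?U \<union> ?H)"
    proof cases
      case 1 then show ?thesis by simp
    next
      case 2
      show ?thesis
      proof (cases "outdeg E y < l")
        case True
        then show ?thesis using 2 by blast
      next
        case False
        then show ?thesis by simp
      qed
    qed
  qed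
  have "card (Bl E (Suc j) v) \<le> card (insert v (?U \<union> ?H))"
    using fU fH by (intro card_mono[OF _ sub]) auto
  also have "\<dots> \<le> Suc (card (?U \<union> ?H))" by (simp add: card_insert_le_m1 card_insert_if)
  also have "card (?U \<union> ?H) \<le> card ?U + card ?H" by (rule card_Un_le)
  also have "card ?U \<le> (\<Sum>w\<in>?B. card {b. (w,b) \<in> E \<and> outdeg E b < l})" by (rule card_UN_le[OF fB])
  also have "\<dots> \<le> (\<Sum>w\<in>?B. l)" using Q unfolding Qinv_def by (intro sum_mono) blast
  also have "\<dots> = l * card ?B" by simp
  finally have *: "card (Bl E (Suc j) v) \<le> Suc (l * card ?B + card ?H)" by simp
  have "card ?B \<ge> 1" using fB Bl_self[of v E j] by (metis One_nat_def Suc_leI card_gt_0_iff empty_iff)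
  hence "l * 1 \<le> l * card ?B" by (rule mult_le_mono2)
  hence o: "1 \<le> l * card ?B" using l by linarith
  have e: "2 * l * card ?B = l * card ?B + l * card ?B" by simp
  show ?thesis using * o e by linarith
qed



lemma real_core:
  fixes P M a g h l :: real
  assumes Mpos: "M \<ge> 1" and P0: "P > 0" and PB: "P \<le> a" and aM: "a \<le> M + 1"
    and sc: "a \<le> 2*l*g + h" and hc: "l*h \<le> M" and lgt: "l > 2*M/P" and lle: "l \<le> 2*M/P + 1"
  shows "P^2/(16*M) \<le> g"
proof -
  have P2M: "P \<le> 2*M" using PB aM Mpos by linarith
  have lP: "2*M < l * P" using lgt P0 by (simp add: field_simps)
  have lP2: "l * P \<le> 4*M"
  proof -
    have "l * P \<le> (2*M/P + 1) * P" using lle P0 by (intro mult_right_mono) auto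
    also have "\<dots> = 2*M + P" using P0 by (simp add: field_simps)
    finally show ?thesis using P2M by linarith
  qed
  have lpos: "l > 0"
  proof - have "2*M/P > 0" using Mpos P0 by simp thus ?thesis using lgt by linarith qed
  have "l * h < l * (P/2)" using hc lP by linarith
  hence hP: "h < P/2" using lpos by simp
  have A: "P/2 < 2 * l * g" using sc PB hP by linarith
  have "P * P < P * (4 * l * g)" using A P0 by (intro mult_strict_left_mono) auto
  also have "\<dots> = 4 * g * (l * P)" by (simp add: algebra_simps)
  also have "\<dots> \<le> 4 * g * (4*M)"
  proof (rule mult_left_mono[OF lP2])
    have "g > 0"
    proof (rule ccontr)
      assume "\<not> g > 0" hence "l * g \<le> 0" using lpos by (simp add: mult_nonneg_nonpos)
      thus False using A P0 by linarith
    qed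
    thus "0 \<le> 4*g" by simp
  qed
  finally have "P^2 \<le> 16 * M * g" by (simp add: power2_eq_square algebra_simps)
  thus ?thesis using Mpos by (simp add: divide_le_eq mult.commute)
qed


lemma step_real:
  assumes fin: "finite E" and Q: "Qinv E" and M1: "card E \<ge> 1" and P0: "P > 0"
    and PB: "P \<le> real (card (Bl E (Suc j) v))"
  shows "P^2 / (16 * real (card E)) \<le> real (card (Bl E j v))"
proof -
  define M where "M = real (card E)"
  define x where "x = 2*M/P"
  define l where "l = nat (floor x) + 1"
  define h where "h = card {y. l \<le> outdeg E y}"
  define g where "g = card (Bl E j v)"
  define a where "a = card (Bl E (Suc j) v)"
  have Mpos: "M \<ge> 1" using M1 unfolding M_def by simp
  have l1: "l \<ge> 1" unfolding l_def by simp
  have x0: "x \<ge> 0" using Mpos P0 unfolding x_def by simp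
  have rl: "real l = of_int (floor x) + 1" unfolding l_def using x0 by simp
  have lgt: "real l > x" using rl real_of_int_floor_add_one_gt[of x] by linarith
  have lle: "real l \<le> x + 1" using rl of_int_floor_le[of x] by linarith
  have aM: "a \<le> card E + 1" unfolding a_def by (rule Bl_card_le[OF fin])
  have aM': "real a \<le> M + 1" unfolding M_def using aM by (metis of_nat_1 of_nat_add of_nat_mono)
  have sc: "a \<le> 2 * l * g + h" unfolding a_def g_def h_def by (rule step_card[OF fin Q l1])
  have sc': "real a \<le> 2 * real l * real g + real h"
    using sc by (metis of_nat_add of_nat_mult of_nat_mono of_nat_numeral)
  have hc: "l * h \<le> card E" unfolding h_def by (rule high_card[OF fin l1])
  have hc': "real l * real h \<le> M" unfolding M_def using hc by (metis of_nat_mono of_nat_mult)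
  have "P^2/(16*M) \<le> real g"
    by (rule real_core[OF Mpos P0 _ aM' sc' hc']) (use PB lgt lle in \<open>auto simp: a_def x_def\<close>)
  thus ?thesis unfolding M_def g_def .
qed



lemma chain:
  assumes fin: "finite E" and Q: "Qinv E" and M1: "card E \<ge> 1" and q0: "q > 0"
    and qB: "q \<le> real (card (Bl E k v))"
  shows "i \<le> k \<Longrightarrow> 16 * real (card E) * (q / (16 * real (card E)))^(2^i) \<le> real (card (Bl E (k-i) v))"
proof (induction i)
  case 0
  then show ?case using qB M1 by simp
next
  case (Suc i)
  define M where "M = real (card E)"
  define s where "s = q / (16 * M)"
  have Mpos: "M \<ge> 1" using M1 unfolding M_def by simp
  have spos: "s > 0" unfolding s_def using q0 Mpos by simp
  have IH: "16 * M * s^(2^i) \<le> real (card (Bl E (k-i) v))" using Suc unfolding M_def s_def by simp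
  have kk: "k - i = Suc (k - Suc i)" using Suc.prems by simp
  have Ppos: "16 * M * s^(2^i) > 0" using spos Mpos by simp
  have "(16 * M * s^(2^i))^2 / (16 * M) \<le> real (card (Bl E (k - Suc i) v))"
    using step_real[OF fin Q M1 Ppos, of "k - Suc i" v] IH kk unfolding M_def by simp
  moreover have "(16 * M * s^(2^i))^2 / (16 * M) = 16 * M * s^(2^Suc i)"
  proof -
    have n: "(2::nat)^Suc i = 2^i*2" by simp
    have e: "s^(2^Suc i) = (s^(2^i))^2" by (simp only: n power_mult)
    have g: "\<And>x t::real. x > 0 \<Longrightarrow> (x*t)^2/x = x*t^2"
      by (simp add: power2_eq_square)
    have "16*M > 0" using Mpos by simp
    show ?thesis unfolding e by (rule g[OF \<open>16*M > 0\<close>])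
  qed
  ultimately have "16 * M * s^(2^Suc i) \<le> real (card (Bl E (k - Suc i) v))" by linarith
  thus ?case unfolding M_def s_def .
qed



lemma anaA:
  fixes q M :: real and N :: nat
  assumes N2: "N \<ge> 2" and q0: "q > 0" and M0: "M > 0" and H: "16*M*(q/(16*M))^N \<le> 1"
  shows "q powr (1 + 1/(real N - 1)) \<le> 16*M"
proof -
  define Y where "Y = 16*M"
  have Y0: "Y > 0" using M0 unfolding Y_def by simp
  have "Y * (q^N / Y^N) \<le> 1" using H unfolding Y_def by (simp add: power_divide)
  hence "q^N \<le> Y^N / Y" using Y0 by (simp add: field_simps)
  also have "Y^N / Y = Y^(N-1)" using Y0 N2 by (simp add: power_diff)
  finally have qN: "q^N \<le> Y^(N-1)" .
  have Nr: "real N - 1 > 0" using N2 by simp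
  have e1: "1 + 1/(real N - 1) = real N * (1/(real N - 1))" using Nr by (simp add: field_simps)
  have "q powr (1 + 1/(real N - 1)) = (q powr real N) powr (1/(real N - 1))"
    unfolding e1 by (simp add: powr_powr)
  also have "q powr real N = q^N" using q0 by (simp add: powr_realpow)
  also have "(q^N) powr (1/(real N - 1)) \<le> (Y^(N-1)) powr (1/(real N - 1))"
    using qN q0 Nr by (intro powr_mono2) auto
  also have "Y^(N-1) = Y powr (real N - 1)"
  proof -
    have "Y^(N-1) = Y powr (real (N-1))" using Y0 by (simp add: powr_realpow)
    moreover have "real (N-1) = real N - 1" using N2 by simp
    ultimately show ?thesis by simp
  qed
  also have "(Y powr (real N - 1)) powr (1/(real N - 1)) = Y" using Nr Y0 by (simp add: powr_powr)
  finally show ?thesis unfolding Y_def .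
qed

lemma anaB:
  fixes q M r :: real and N :: nat
  assumes N1: "N \<ge> 1" and q0: "q > 0" and M0: "M > 0" and r0: "r \<ge> 0"
    and H: "r * (16*M*(q/(16*M))^N) \<le> 2*M"
  shows "q * r powr (1/real N) \<le> 16*M"
proof -
  define s where "s = q/(16*M)"
  have s0: "s > 0" using q0 M0 unfolding s_def by simp
  have "16*M*(r * s^N) \<le> 16 * M * (1/8)" using H unfolding s_def by (simp add: algebra_simps)
  hence "r * s^N \<le> 1/8" using M0 by simp
  hence "r * s^N \<le> 1" by simp
  hence rle: "r \<le> (1/s)^N" using s0 by (simp add: field_simps power_divide)
  have "r powr (1/real N) \<le> ((1/s)^N) powr (1/real N)"
    using rle r0 by (intro powr_mono2) auto
  also have "(1/s)^N = (1/s) powr real N" using s0 by (simp add: powr_realpow)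
  also have "((1/s) powr real N) powr (1/real N) = 1/s" using N1 s0 by (simp add: powr_powr)
  finally have "q * r powr (1/real N) \<le> q * (1/s)" using q0 by (intro mult_left_mono) auto
  also have "q * (1/s) = 16*M" unfolding s_def using q0 M0 by simp
  finally show ?thesis .
qed

theorem mainTheorem15:
  shows "\<exists>c>0. \<forall>n A m r q k. k \<ge> 1 \<longrightarrow> r \<ge> 1 \<longrightarrow> depth A \<le> m \<longrightarrow>
            guarantees n A r q k \<longrightarrow>
            real m \<ge> c * max (real q powr (1 + 1 / (2 ^ k - 1)))
                               (real q * real r powr (1 / 2 ^ (k - 1)))"
proof (rule exI[of _ "1/16"], intro conjI allI impI)
  show "(1/16::real) > 0" by simp
  fix n A m r q k
  assume k1: "k \<ge> (1::nat)" and r1: "r \<ge> (1::nat)" and dA: "depth A \<le> m" and G: "guarantees n A r q k"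
  obtain L E where LE: "run {} A = (L,E)" by (cases "run {} A")
  have finE: "finite E" and cardE: "card E \<le> depth A" using run_card[of "{}" A] LE by auto
  have QE: "Qinv E" using run_Qinv[of "{}" A] Qinv_empty LE by auto
  have outp: "\<And>x. (\<forall>(i,j)\<in>E. x j \<le> x i + 1) \<Longrightarrow> outputs x A L"
    using run_outputs[of "{}" A] LE by auto
  have "outputs (\<lambda>_. 0) A L" by (rule outp) auto
  hence lenL: "length L = r" and dL: "distinct L" using G unfolding guarantees_def by auto
  have Bq: "q + 1 \<le> card (Bl E k e)" if e: "e \<in> set L" for e
  proof -
    define x where "x y = real (card {t \<in> {..k}. y \<notin> Bl E t e})" for y
    have cons: "\<forall>(i,j)\<in>E. x j \<le> x i + 1"
    proof (intro ballI)
      fix p assume p: "p \<in> E"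
      obtain i j where pij: "p = (i,j)" by (cases p)
      have ij: "(i,j) \<in> E" using p pij by simp
      let ?S = "{t \<in> {..k}. i \<notin> Bl E t e}"
      have sub: "{t \<in> {..k}. j \<notin> Bl E t e} \<subseteq> insert 0 (Suc ` ?S)"
      proof
        fix t assume t: "t \<in> {t \<in> {..k}. j \<notin> Bl E t e}"
        show "t \<in> insert 0 (Suc ` ?S)"
        proof (cases t)
          case 0 then show ?thesis by simp
        next
          case (Suc t')
          have "i \<notin> Bl E t' e"
          proof
            assume "i \<in> Bl E t' e"
            hence "j \<in> Bl E (Suc t') e" using ij by (auto simp: Nb_def)
            thus False using t Suc by auto
          qed
          thus ?thesis using t Suc by auto
        qed
      qed
      have fS: "finite ?S" by simp
      have "card {t \<in> {..k}. j \<notin> Bl E t e} \<le> card (insert 0 (Suc ` ?S))"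
        using fS by (intro card_mono[OF _ sub]) auto
      also have "\<dots> \<le> Suc (card (Suc ` ?S))" using fS by (simp add: card_insert_if)
      also have "card (Suc ` ?S) \<le> card ?S" by (rule card_image_le[OF fS])
      finally have "card {t \<in> {..k}. j \<notin> Bl E t e} \<le> card ?S + 1" by simp
      hence "x j \<le> x i + 1" unfolding x_def by (metis of_nat_1 of_nat_add of_nat_mono)
      thus "case p of (i,j) \<Rightarrow> x j \<le> x i + 1" using pij by simp
    qed
    have out: "outputs x A L" by (rule outp[OF cons])
    hence cnt: "card {y \<in> {..<n}. y \<noteq> e \<and> k_greater k (x e) (x y)} \<ge> q"
      using G e unfolding guarantees_def by blast
    have xe: "x e = 0" unfolding x_def using Bl_self by simp
    have sub: "{y \<in> {..<n}. y \<noteq> e \<and> k_greater k (x e) (x y)} \<subseteq> Bl E k e - {e}"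
    proof
      fix y assume y: "y \<in> {y \<in> {..<n}. y \<noteq> e \<and> k_greater k (x e) (x y)}"
      hence "x y \<le> real k" using xe unfolding k_greater_def by auto
      hence c: "card {t \<in> {..k}. y \<notin> Bl E t e} \<le> k" unfolding x_def by simp
      have "{t \<in> {..k}. y \<notin> Bl E t e} \<noteq> {..k}"
      proof
        assume "{t \<in> {..k}. y \<notin> Bl E t e} = {..k}"
        hence "card {t \<in> {..k}. y \<notin> Bl E t e} = Suc k" by simp
        thus False using c by simp
      qed
      then obtain t where "t \<le> k" "y \<in> Bl E t e" by auto
      hence "y \<in> Bl E k e" using Bl_mono by blast
      thus "y \<in> Bl E k e - {e}" using y by auto
    qed
    have fB: "finite (Bl E k e)" by (rule Bl_finite[OF finE])
    have "card {y \<in> {..<n}. y \<noteq> e \<and> k_greater k (x e) (x y)} \<le> card (Bl E k e - {e})"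
      by (rule card_mono[OF _ sub]) (use fB in simp)
    hence "q \<le> card (Bl E k e - {e})" using cnt by (rule le_trans[rotated])
    also have "\<dots> = card (Bl E k e) - 1" using Bl_self by (simp add: card_Diff_singleton)
    finally have qc: "q \<le> card (Bl E k e) - 1" .
    have "0 < card (Bl E k e)" using fB Bl_self[of e E k] by (auto simp: card_gt_0_iff)
    thus ?thesis using qc by arith
  qed
  show "real m \<ge> 1/16 * max (real q powr (1 + 1 / (2 ^ k - 1))) (real q * real r powr (1 / 2 ^ (k - 1)))"
  proof (cases "q = 0")
    case True
    then show ?thesis by simp
  next
    case False
    hence q1: "q \<ge> 1" by simp
    have "L \<noteq> []" using lenL r1 by auto
    then obtain e0 where e0: "e0 \<in> set L" by (cases L) auto
    have M1: "card E \<ge> 1"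
    proof (rule ccontr)
      assume "\<not> card E \<ge> 1"
      hence "card E = 0" by simp
      hence "E = {}" using finE by simp
      hence "Bl E k e0 = {e0}" using Bl_empty_out[of e0 E k] by simp
      thus False using Bq[OF e0] q1 by simp
    qed
    define M where "M = real (card E)"
    have M0: "M > 0" and Mge: "M \<ge> 1" using M1 unfolding M_def by auto
    have qpos: "real q > 0" using q1 by simp
    have qB: "real q \<le> real (card (Bl E k e))" if "e \<in> set L" for e
      using Bq[OF that] by simp
    have "16 * M * (real q / (16 * M))^(2^k) \<le> real (card (Bl E (k-k) e0))"
      using chain[OF finE QE M1 qpos qB[OF e0], of k] unfolding M_def by simp
    hence H1: "16 * M * (real q / (16 * M))^(2^k) \<le> 1" by simp
    have N2: "(2::nat)^k \<ge> 2" using k1 by (cases k) auto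
    have A: "real q powr (1 + 1/(real (2^k::nat) - 1)) \<le> 16*M"
      by (rule anaA[OF N2 qpos M0 H1])
    have A': "real q powr (1 + 1 / (2 ^ k - 1)) \<le> 16*M" using A by simp
    define P1 where "P1 = 16 * M * (real q / (16 * M))^(2^(k-1))"
    have per: "P1 \<le> 2 * real (outdeg E e)" if e: "e \<in> set L" for e
    proof -
      have "P1 \<le> real (card (Bl E (k-(k-1)) e))"
        using chain[OF finE QE M1 qpos qB[OF e], of "k-1"] unfolding M_def P1_def by simp
      hence "P1 \<le> real (card (Bl E 1 e))" using k1 by simp
      moreover have "card (Bl E 1 e) \<le> 1 + outdeg E e"
      proof -
        have "Bl E 1 e = insert e {b. (e,b) \<in> E}" by (auto simp: Nb_def)
        thus ?thesis using outdeg_finite[OF finE, of e] unfolding outdeg_def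
          by (simp add: card_insert_if)
      qed
      moreover have "outdeg E e \<ge> 1"
      proof (rule ccontr)
        assume "\<not> outdeg E e \<ge> 1"
        hence "card {b. (e,b) \<in> E} = 0" unfolding outdeg_def by simp
        hence "{b. (e,b) \<in> E} = {}" using outdeg_finite[OF finE, of e] by (simp only: card_0_eq)
        hence "Bl E k e = {e}" by (rule Bl_empty_out)
        thus False using Bq[OF e] q1 by simp
      qed
      ultimately show ?thesis by linarith
    qed
    have "real r * P1 = (\<Sum>e\<in>set L. P1)" using lenL dL by (simp add: distinct_card)
    also have "\<dots> \<le> (\<Sum>e\<in>set L. 2 * real (outdeg E e))" by (rule sum_mono) (rule per)
    also have "\<dots> = 2 * real (\<Sum>e\<in>set L. outdeg E e)" by (simp add: sum_distrib_left)
    also have "\<dots> \<le> 2 * M"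
    proof -
      have "real (\<Sum>e\<in>set L. outdeg E e) \<le> real (card E)"
        using sum_outdeg_le[OF finE, of "set L"] by (simp only: of_nat_le_iff finite_set simp_thms)
      thus ?thesis unfolding M_def by linarith
    qed
    finally have H2: "real r * (16 * M * (real q / (16 * M))^(2^(k-1))) \<le> 2 * M" unfolding P1_def .
    have N1: "(2::nat)^(k-1) \<ge> 1" by simp
    have B: "real q * real r powr (1/real (2^(k-1)::nat)) \<le> 16*M"
      by (rule anaB[OF N1 qpos M0 _ H2]) simp
    have B': "real q * real r powr (1 / 2 ^ (k - 1)) \<le> 16*M" using B by simp
    have "real (card E) \<le> real m" using cardE dA by simp
    hence "16 * M \<le> 16 * real m" unfolding M_def by simp
    thus ?thesis using A' B' by simp
  qed
qed

end
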